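(* Let $(\mathcal M^-,\mathcal M^+)$ and $(\mathcal N^-,\mathcal N^+)$ be symbolic matrix bisystems satisfying FPCC. If they are properly strong shift equivalent in 1-step, then they are strong shift equivalent in 1-step.
   Context: Formal sums/specifications: $\mathfrak S_\Sigma$ = finite formal sums over a finite alphabet; products of matrices over $C$ and $D$ are over $C\cdot D=\{cd\}$; a specification is a bijection from a subset of one alphabet (possibly of two-letter words) onto a subset of another; $\mathcal A\overset{\phi}{\simeq}\mathcal A'$ means $\mathcal A'$ is obtained by replacing each symbol (resp. two-letter word) $a$ of $\mathcal A$ by $\phi(a)$; $\kappa(ab)=ba$. Symbolic matrix bisystem over $\Sigma^\pm$: $(\mathcal M^-_{l,l+1},\mathcal M^+_{l,l+1})_{l\ge0}$, $m(l)\times m(l+1)$ matrices over $\mathfrak S_{\Sigma^-},\mathfrak S_{\Sigma^+}$, no zero rows/columns, no symbol repeated within an entry or a column, $\mathcal M^-_{l,l+1}\mathcal M^+_{l+1,l+2}\overset{\kappa}{\simeq}\mathcal M^+_{l,l+1}\mathcal M^-_{l+1,l+2}$. FPCC: $m(0)=1$, $\Sigma^-=\Sigma^+$, and for each $l\ge1,j$ the words in $[\mathcal M^-_{0,1}\cdots\mathcal M^-_{l-1,l}](1,j)$ are the reversals of those in $[\mathcal M^+_{0,1}\cdots\mathcal M^+_{l-1,l}](1,j)$. Properly strong shift equivalent in 1-step ($\mathcal M$ over $\Sigma_\mathcal M$, $\mathcal N$ over $\Sigma_\mathcal N$, sizes $m(l),n(l)$): alphabets $C,D$, specifications $\varphi:\Sigma_\mathcal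 M\to C\cdot D$, $\phi:\Sigma_\mathcal N\to D\cdot C$, matrices $\mathcal P_l$ ($c(l)\times d(l+1)$ over $C$), $\mathcal Q_l$ ($d(l)\times c(l+1)$ over $D$), $\mathcal X_l$ over $D$ ($d(l)\times d(l+1)$, $l$ odd; $c(l)\times c(l+1)$, $l$ even), $\mathcal Y_l$ over $C$ ($c(l)\times c(l+1)$, $l$ odd; $d(l)\times d(l+1)$, $l$ even) with $\mathcal M^+_{l,l+1}\overset{\varphi}{\simeq}\mathcal P_{2l}\mathcal Q_{2l+1}$, $\mathcal N^+_{l,l+1}\overset{\phi}{\simeq}\mathcal Q_{2l}\mathcal P_{2l+1}$, $\mathcal M^-_{l,l+1}\overset{\kappa\varphi}{\simeq}\mathcal X_{2l}\mathcal Y_{2l+1}$, $\mathcal N^-_{l,l+1}\overset{\kappa\phi}{\simeq}\mathcal Y_{2l}\mathcal X_{2l+1}$, $\mathcal Y_{2l+1}\mathcal P_{2l+2}\overset{\kappa}{\simeq}\mathcal P_{2l+1}\mathcal Y_{2l+2}$, $\mathcal X_{2l+1}\mathcal Q_{2l+2}\overset{\kappa}{\simeq}\mathcal Q_{2l+1}\mathcal X_{2l+2}$, $\mathcal X_{2l}\mathcal P_{2l+1}\overset{\kappa}{\simeq}\mathcal P_{2l}\mathcal X_{2l+1}$, $\mathcal Y_{2l}\mathcal Q_{2l+1}\overset{\kappa}{\simeq}\mathcal Q_{2l}\mathcal Y_{2l+1}$ for all $l\ge0$. Strong shift equivalent in 1-step (for symbolic matrix bisystems $\mathcal M$ over $\Sigma^\pm_\mathcal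 M$, $\mathcal N$ over $\Sigma^\pm_\mathcal N$): there exist alphabets $C,D$, specifications $\varphi_1:\Sigma^-_\mathcal M\cdot\Sigma^+_\mathcal M\to C\cdot D$, $\varphi_2:\Sigma^-_\mathcal N\cdot\Sigma^+_\mathcal N\to D\cdot C$, $\phi^\pm_C:\Sigma^\pm_\mathcal M\cdot C\to C\cdot\Sigma^\pm_\mathcal N$, $\phi^\pm_D:\Sigma^\pm_\mathcal N\cdot D\to D\cdot\Sigma^\pm_\mathcal M$, and for each $l$ an $m(l)\times n(l+1)$ matrix $\mathcal H_l$ over $C$ and an $n(l)\times m(l+1)$ matrix $\mathcal K_l$ over $D$ with $\mathcal M^-_{l,l+1}\mathcal M^+_{l+1,l+2}\overset{\varphi_1}{\simeq}\mathcal H_l\mathcal K_{l+1}$, $\mathcal N^-_{l,l+1}\mathcal N^+_{l+1,l+2}\overset{\varphi_2}{\simeq}\mathcal K_l\mathcal H_{l+1}$, $\mathcal M^+_{l,l+1}\mathcal H_{l+1}\overset{\phi^+_C}{\simeq}\mathcal H_l\mathcal N^+_{l+1,l+2}$, $\mathcal N^+_{l,l+1}\mathcal K_{l+1}\overset{\phi^+_D}{\simeq}\mathcal K_l\mathcal M^+_{l+1,l+2}$, $\mathcal M^-_{l,l+1}\mathcal H_{l+1}\overset{\phi^-_C}{\simeq}\mathcal H_l\mathcal N^-_{l+1,l+2}$, $\mathcal N^-_{l,l+1}\mathcal K_{l+1}\overset{\phi^-_D}{\simeq}\mathcal K_l\mathcal M^-_{l+1,l+2}$. *)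

theory Defs
  imports Main "HOL-Library.Multiset"
begin

text \<open>A word is a list of symbols; a formal sum of words is a multiset of
  words. A symbolic matrix is a function of (row, column) indices (0-based), with its
  dimensions given separately.\<close>

type_synonym word = "nat list"
type_synonym smat = "nat \<Rightarrow> nat \<Rightarrow> word multiset"

definition words1 :: "nat set \<Rightarrow> word set" where
  "words1 A = {[a] | a. a \<in> A}"

definition words2 :: "nat set \<Rightarrow> nat set \<Rightarrow> word set" where
  "words2 A B = {[a, b] | a b. a \<in> A \<and> b \<in> B}"

definition over :: "nat set \<Rightarrow> nat \<Rightarrow> nat \<Rightarrow> smat \<Rightarrow> bool" where
  "over A r c M \<longleftrightarrow> (\<forall>i<r. \<forall>j<c. set_mset (M i j) \<subseteq> words1 A)"

definition mconc :: "word multiset \<Rightarrow> word multiset \<Rightarrow> word multiset" where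
  "mconc X Y = (\<Sum>u\<in>#X. image_mset (\<lambda>v. u @ v) Y)"

definition mprod :: "nat \<Rightarrow> smat \<Rightarrow> smat \<Rightarrow> smat" where
  "mprod k A B = (\<lambda>i j. \<Sum>t<k. mconc (A i t) (B t j))"

fun mpow :: "(nat \<Rightarrow> nat) \<Rightarrow> (nat \<Rightarrow> smat) \<Rightarrow> nat \<Rightarrow> smat" where
  "mpow m M 0 = (\<lambda>i j. if i = j then {#[]#} else {#})"
| "mpow m M (Suc l) = mprod (m l) (mpow m M l) (M l)"

definition is_spec :: "word set \<Rightarrow> word set \<Rightarrow> word set \<Rightarrow> (word \<Rightarrow> word) \<Rightarrow> bool" where
  "is_spec A B S \<phi> \<longleftrightarrow> S \<subseteq> A \<and> inj_on \<phi> S \<and> \<phi> ` S \<subseteq> B"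

definition sim :: "word set \<Rightarrow> (word \<Rightarrow> word) \<Rightarrow> nat \<Rightarrow> nat \<Rightarrow> smat
                    \<Rightarrow> nat \<Rightarrow> nat \<Rightarrow> smat \<Rightarrow> bool" where
  "sim S \<phi> r c A r' c' A' \<longleftrightarrow> r = r' \<and> c = c' \<and>
     (\<forall>i<r. \<forall>j<c. set_mset (A i j) \<subseteq> S \<and> A' i j = image_mset \<phi> (A i j))"

definition kappa :: "word \<Rightarrow> word" where
  "kappa w = rev w"

definition nozero :: "nat \<Rightarrow> nat \<Rightarrow> smat \<Rightarrow> bool" where
  "nozero r c M \<longleftrightarrow> (\<forall>i<r. \<exists>j<c. M i j \<noteq> {#}) \<and> (\<forall>j<c. \<exists>i<r. M i j \<noteq> {#})"

definition norep :: "nat \<Rightarrow> nat \<Rightarrow> smat \<Rightarrow> bool" where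
  "norep r c M \<longleftrightarrow> (\<forall>j<c. \<forall>w. (\<Sum>i<r. count (M i j) w) \<le> 1)"

definition bisystem :: "nat set \<Rightarrow> nat set \<Rightarrow> (nat \<Rightarrow> nat) \<Rightarrow> (nat \<Rightarrow> smat)
                          \<Rightarrow> (nat \<Rightarrow> smat) \<Rightarrow> bool" where
  "bisystem Am Ap m Mm Mp \<longleftrightarrow> finite Am \<and> finite Ap \<and>
    (\<forall>l. over Am (m l) (m (Suc l)) (Mm l) \<and> over Ap (m l) (m (Suc l)) (Mp l) \<and>
         nozero (m l) (m (Suc l)) (Mm l) \<and> nozero (m l) (m (Suc l)) (Mp l) \<and>
         norep (m l) (m (Suc l)) (Mm l) \<and> norep (m l) (m (Suc l)) (Mp l) \<and>
         sim (words2 Am Ap) kappa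
           (m l) (m (l + 2)) (mprod (m (Suc l)) (Mm l) (Mp (Suc l)))
           (m l) (m (l + 2)) (mprod (m (Suc l)) (Mp l) (Mm (Suc l))))"

definition FPCC :: "nat set \<Rightarrow> nat set \<Rightarrow> (nat \<Rightarrow> nat) \<Rightarrow> (nat \<Rightarrow> smat)
                      \<Rightarrow> (nat \<Rightarrow> smat) \<Rightarrow> bool" where
  "FPCC Am Ap m Mm Mp \<longleftrightarrow> m 0 = 1 \<and> Am = Ap \<and>
    (\<forall>l\<ge>1. \<forall>j<m l. mpow m Mm l 0 j = image_mset rev (mpow m Mp l 0 j))"

definition psse1 :: "nat set \<Rightarrow> (nat \<Rightarrow> nat) \<Rightarrow> (nat \<Rightarrow> smat) \<Rightarrow> (nat \<Rightarrow> smat)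
                      \<Rightarrow> nat set \<Rightarrow> (nat \<Rightarrow> nat) \<Rightarrow> (nat \<Rightarrow> smat) \<Rightarrow> (nat \<Rightarrow> smat) \<Rightarrow> bool" where
  "psse1 SM m Mm Mp SN n Nm Np \<longleftrightarrow>
    (\<exists>C D c d S\<phi> \<phi> S\<psi> \<psi> P Q X Y.
      finite C \<and> finite D \<and>
      is_spec (words1 SM) (words2 C D) S\<phi> \<phi> \<and> is_spec (words1 SN) (words2 D C) S\<psi> \<psi> \<and>
      (\<forall>l. over C (c l) (d (Suc l)) (P l) \<and> over D (d l) (c (Suc l)) (Q l) \<and>
           (if odd l then over D (d l) (d (Suc l)) (X l) \<and> over C (c l) (c (Suc l)) (Y l)
            else over D (c l) (c (Suc l)) (X l) \<and> over C (d l) (d (Suc l)) (Y l))) \<and>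
      (\<forall>l.
        sim S\<phi> \<phi> (m l) (m (Suc l)) (Mp l)
          (c (2*l)) (c (2*l+2)) (mprod (d (2*l+1)) (P (2*l)) (Q (2*l+1))) \<and>
        sim S\<psi> \<psi> (n l) (n (Suc l)) (Np l)
          (d (2*l)) (d (2*l+2)) (mprod (c (2*l+1)) (Q (2*l)) (P (2*l+1))) \<and>
        sim S\<phi> (kappa \<circ> \<phi>) (m l) (m (Suc l)) (Mm l)
          (c (2*l)) (c (2*l+2)) (mprod (c (2*l+1)) (X (2*l)) (Y (2*l+1))) \<and>
        sim S\<psi> (kappa \<circ> \<psi>) (n l) (n (Suc l)) (Nm l)
          (d (2*l)) (d (2*l+2)) (mprod (d (2*l+1)) (Y (2*l)) (X (2*l+1))) \<and>
        sim (words2 C C) kappa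
          (c (2*l+1)) (d (2*l+3)) (mprod (c (2*l+2)) (Y (2*l+1)) (P (2*l+2)))
          (c (2*l+1)) (d (2*l+3)) (mprod (d (2*l+2)) (P (2*l+1)) (Y (2*l+2))) \<and>
        sim (words2 D D) kappa
          (d (2*l+1)) (c (2*l+3)) (mprod (d (2*l+2)) (X (2*l+1)) (Q (2*l+2)))
          (d (2*l+1)) (c (2*l+3)) (mprod (c (2*l+2)) (Q (2*l+1)) (X (2*l+2))) \<and>
        sim (words2 D C) kappa
          (c (2*l)) (d (2*l+2)) (mprod (c (2*l+1)) (X (2*l)) (P (2*l+1)))
          (c (2*l)) (d (2*l+2)) (mprod (d (2*l+1)) (P (2*l)) (X (2*l+1))) \<and>
        sim (words2 C D) kappa
          (d (2*l)) (c (2*l+2)) (mprod (d (2*l+1)) (Y (2*l)) (Q (2*l+1)))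
          (d (2*l)) (c (2*l+2)) (mprod (c (2*l+1)) (Q (2*l)) (Y (2*l+1)))))"

definition sse1 :: "nat set \<Rightarrow> nat set \<Rightarrow> (nat \<Rightarrow> nat) \<Rightarrow> (nat \<Rightarrow> smat) \<Rightarrow> (nat \<Rightarrow> smat)
                     \<Rightarrow> nat set \<Rightarrow> nat set \<Rightarrow> (nat \<Rightarrow> nat) \<Rightarrow> (nat \<Rightarrow> smat) \<Rightarrow> (nat \<Rightarrow> smat)
                     \<Rightarrow> bool" where
  "sse1 SMm SMp m Mm Mp SNm SNp n Nm Np \<longleftrightarrow>
    (\<exists>C D S1 \<phi>1 S2 \<phi>2 SCp \<phi>Cp SCm \<phi>Cm SDp \<phi>Dp SDm \<phi>Dm H K.
      finite C \<and> finite D \<and>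
      is_spec (words2 SMm SMp) (words2 C D) S1 \<phi>1 \<and>
      is_spec (words2 SNm SNp) (words2 D C) S2 \<phi>2 \<and>
      is_spec (words2 SMp C) (words2 C SNp) SCp \<phi>Cp \<and>
      is_spec (words2 SMm C) (words2 C SNm) SCm \<phi>Cm \<and>
      is_spec (words2 SNp D) (words2 D SMp) SDp \<phi>Dp \<and>
      is_spec (words2 SNm D) (words2 D SMm) SDm \<phi>Dm \<and>
      (\<forall>l. over C (m l) (n (Suc l)) (H l) \<and> over D (n l) (m (Suc l)) (K l) \<and>
        sim S1 \<phi>1 (m l) (m (l+2)) (mprod (m (Suc l)) (Mm l) (Mp (Suc l)))
                  (m l) (m (l+2)) (mprod (n (Suc l)) (H l) (K (Suc l))) \<and>
        sim S2 \<phi>2 (n l) (n (l+2)) (mprod (n (Suc l)) (Nm l) (Np (Suc l)))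
                  (n l) (n (l+2)) (mprod (m (Suc l)) (K l) (H (Suc l))) \<and>
        sim SCp \<phi>Cp (m l) (n (l+2)) (mprod (m (Suc l)) (Mp l) (H (Suc l)))
                    (m l) (n (l+2)) (mprod (n (Suc l)) (H l) (Np (Suc l))) \<and>
        sim SDp \<phi>Dp (n l) (m (l+2)) (mprod (n (Suc l)) (Np l) (K (Suc l)))
                    (n l) (m (l+2)) (mprod (m (Suc l)) (K l) (Mp (Suc l))) \<and>
        sim SCm \<phi>Cm (m l) (n (l+2)) (mprod (m (Suc l)) (Mm l) (H (Suc l)))
                    (m l) (n (l+2)) (mprod (n (Suc l)) (H l) (Nm (Suc l))) \<and>
        sim SDm \<phi>Dm (n l) (m (l+2)) (mprod (n (Suc l)) (Nm l) (K (Suc l)))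
                    (n l) (m (l+2)) (mprod (m (Suc l)) (K l) (Mm (Suc l)))))"

end

theory Submission
  imports Defs "HOL-Library.Nat_Bijection"
begin


lemma mconc_empty1[simp]: "mconc {#} Y = {#}" by (simp add: mconc_def)
lemma mconc_add1[simp]: "mconc (add_mset a X) Y = image_mset (\<lambda>v. a @ v) Y + mconc X Y"
  by (simp add: mconc_def)
lemma mconc_plus1: "mconc (X + X') Y = mconc X Y + mconc X' Y"
  by (simp add: mconc_def)
lemma mconc_empty2[simp]: "mconc X {#} = {#}" by (induction X) auto
lemma mconc_add2: "mconc X (add_mset b Y) = image_mset (\<lambda>u. u @ b) X + mconc X Y"
  by (induction X) auto
lemma mconc_plus2: "mconc X (Y + Y') = mconc X Y + mconc X Y'"
  by (induction X) (auto simp: mconc_def)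
lemma mconc_sum1: "mconc (\<Sum>t\<in>T. f t) Y = (\<Sum>t\<in>T. mconc (f t) Y)"
  by (induction T rule: infinite_finite_induct) (auto simp: mconc_plus1)
lemma mconc_sum2: "mconc Y (\<Sum>t\<in>T. f t) = (\<Sum>t\<in>T. mconc Y (f t))"
  by (induction T rule: infinite_finite_induct) (auto simp: mconc_plus2)
lemma mconc_img: "mconc (image_mset (\<lambda>v. a @ v) Y) Z = image_mset (\<lambda>w. a @ w) (mconc Y Z)"
  by (induction Y) (auto simp: mconc_plus1 image_mset.compositionality comp_def)
lemma mconc_assoc: "mconc (mconc X Y) Z = mconc X (mconc Y Z)"
  by (induction X) (auto simp: mconc_plus1 mconc_img)

lemma image_mconc:
  assumes "\<forall>u\<in>#A. \<forall>v\<in>#B. F (u @ v) = g u @ h v"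
  shows "mconc (image_mset g A) (image_mset h B) = image_mset F (mconc A B)"
  using assms
proof (induction A)
  case empty then show ?case by simp
next
  case (add a A)
  have "image_mset (\<lambda>v. g a @ v) (image_mset h B) = image_mset F (image_mset (\<lambda>v. a @ v) B)"
    using add.prems by (auto simp: image_mset.compositionality intro!: image_mset_cong)
  then show ?case using add by simp
qed

lemma set_mconc: "w \<in># mconc A B \<Longrightarrow> \<exists>u v. u \<in># A \<and> v \<in># B \<and> w = u @ v"
  by (induction A) auto

lemma mprod_assoc: "mprod k2 (mprod k1 A B) C = mprod k1 A (mprod k2 B C)"
  unfolding mprod_def
  by (simp add: mconc_sum1 mconc_sum2 mconc_assoc sum.swap[of _ "{..<k2}"])

lemma image_mset_sumset: "image_mset F (\<Sum>t\<in>T. f t) = (\<Sum>t\<in>T. image_mset F (f t))"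
  by (induction T rule: infinite_finite_induct) auto
lemma in_sumset: "w \<in># (\<Sum>t\<in>T. f t) \<Longrightarrow> \<exists>t\<in>T. w \<in># f t"
  by (induction T rule: infinite_finite_induct) auto

lemma image_mprod:
  assumes "\<forall>t<k. A' i t = image_mset g (A i t)" "\<forall>t<k. B' t j = image_mset h (B t j)"
    "\<forall>t<k. \<forall>u\<in>#A i t. \<forall>v\<in>#B t j. F (u @ v) = g u @ h v"
  shows "mprod k A' B' i j = image_mset F (mprod k A B i j)"
  unfolding mprod_def using assms
  by (auto simp add: image_mset_sumset image_mconc intro!: sum.cong)

lemma set_mprod: "w \<in># mprod k A B i j \<Longrightarrow> \<exists>t<k. \<exists>u v. u \<in># A i t \<and> v \<in># B t j \<and> w = u @ v"
  unfolding mprod_def by (fastforce dest!: in_sumset set_mconc)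

definition lover :: "nat \<Rightarrow> nat \<Rightarrow> nat \<Rightarrow> smat \<Rightarrow> bool" where
  "lover n r c M \<longleftrightarrow> (\<forall>i<r. \<forall>j<c. \<forall>w\<in>#M i j. length w = n)"

lemma over_lover: "over A r c M \<Longrightarrow> lover 1 r c M"
  by (fastforce simp: over_def lover_def words1_def)

lemma lover_mprod: "lover a r k M \<Longrightarrow> lover b k c N \<Longrightarrow> lover (a+b) r c (mprod k M N)"
  unfolding lover_def by (fastforce dest!: set_mprod)

lemma loverD: "lover n r c M \<Longrightarrow> i < r \<Longrightarrow> j < c \<Longrightarrow> w \<in># M i j \<Longrightarrow> length w = n"
  by (simp add: lover_def)

lemma over_mprod2: "over A r k M \<Longrightarrow> over B k c N \<Longrightarrow> i < r \<Longrightarrow> j < c \<Longrightarrow> w \<in># mprod k M N i j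
   \<Longrightarrow> \<exists>x y. w = [x,y] \<and> x \<in> A \<and> y \<in> B"
  unfolding over_def words1_def by (fastforce dest!: set_mprod)

lemma sim_dims: "sim S \<phi> r c A r' c' A' \<Longrightarrow> r = r' \<and> c = c'"
  by (simp add: sim_def)

lemma sim_inv: "sim S \<phi> r c A r' c' A' \<Longrightarrow> inj_on \<phi> S \<Longrightarrow> i < r \<Longrightarrow> j < c
   \<Longrightarrow> A i j = image_mset (inv_into S \<phi>) (A' i j)"
proof -
  assume s: "sim S \<phi> r c A r' c' A'" and inj: "inj_on \<phi> S" and ij: "i < r" "j < c"
  then have 1: "set_mset (A i j) \<subseteq> S" and 2: "A' i j = image_mset \<phi> (A i j)" by (auto simp: sim_def)
  have "image_mset (inv_into S \<phi>) (A' i j) = image_mset (\<lambda>x. x) (A i j)"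
    unfolding 2 image_mset.compositionality using 1 inj
    by (intro image_mset_cong) (auto intro: inv_into_f_f)
  then show ?thesis by simp
qed

lemma sim_in: "sim S \<phi> r c A r' c' A' \<Longrightarrow> i < r \<Longrightarrow> j < c \<Longrightarrow> w \<in># A' i j \<Longrightarrow> \<exists>a. a \<in># A i j \<and> a \<in> S \<and> w = \<phi> a"
  unfolding sim_def by auto

lemma sim_rev: "sim S kappa r c A r' c' A' \<Longrightarrow> i < r \<Longrightarrow> j < c
   \<Longrightarrow> A i j = image_mset rev (A' i j)"
  unfolding sim_def kappa_def by (simp add: image_mset.compositionality comp_def)

lemma sim_rev': "sim S kappa r c A r' c' A' \<Longrightarrow> i < r \<Longrightarrow> j < c
   \<Longrightarrow> A' i j = image_mset rev (A i j)"
  unfolding sim_def kappa_def by (simp add: image_mset.compositionality comp_def)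



definition enc2 :: "word \<Rightarrow> word" where "enc2 w = [prod_encode (w!0, w!1)]"

definition phi1 :: "(word \<Rightarrow> word) \<Rightarrow> word \<Rightarrow> word" where
  "phi1 \<phi> w = [prod_encode (\<phi> [w!0] ! 1, \<phi> [w!1] ! 0), prod_encode (\<phi> [w!0] ! 0, \<phi> [w!1] ! 1)]"

definition S1 :: "word set \<Rightarrow> word set" where
  "S1 S\<phi> = {[a,b] | a b. [a] \<in> S\<phi> \<and> [b] \<in> S\<phi>}"

lemma spec_elem: "is_spec (words1 SM) (words2 C D) S\<phi> \<phi> \<Longrightarrow> a \<in> S\<phi> \<Longrightarrow>
   \<exists>a0 a1 a2. a = [a0] \<and> a0 \<in> SM \<and> \<phi> a = [a1,a2] \<and> a1 \<in> C \<and> a2 \<in> D"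
  unfolding is_spec_def words1_def words2_def by blast

lemma core1:
  fixes \<phi> :: "word \<Rightarrow> word"
  assumes spec: "is_spec (words1 SM) (words2 C D) S\<phi> \<phi>"
    and oX0: "over D ml k1 X0" and oY1: "over C k1 ml1 Y1" and oP2: "over C ml1 k4 P2"
    and oQ3: "over D k4 ml2 Q3" and oP1: "over C k1 k3 P1" and oY2: "over C k3 k4 Y2"
    and sc: "sim S\<phi> (kappa \<circ> \<phi>) ml ml1 Mm0 ml ml1 (mprod k1 X0 Y1)"
    and sa: "sim S\<phi> \<phi> ml1 ml2 Mp1 ml1 ml2 (mprod k4 P2 Q3)"
    and se: "sim (words2 C C) kappa k1 k4 (mprod ml1 Y1 P2) k1 k4 (mprod k3 P1 Y2)"
    and ij: "i < ml" "j < ml2"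
  shows "set_mset (mprod ml1 Mm0 Mp1 i j) \<subseteq> S1 S\<phi> \<and>
     mprod k3 (\<lambda>i t. image_mset enc2 (mprod k1 X0 P1 i t)) (\<lambda>t j. image_mset enc2 (mprod k4 Y2 Q3 t j)) i j
       = image_mset (phi1 \<phi>) (mprod ml1 Mm0 Mp1 i j)"
proof -
  have injp: "inj_on \<phi> S\<phi>" using spec by (simp add: is_spec_def)
  have injk: "inj_on (kappa \<circ> \<phi>) S\<phi>"
    using injp by (auto simp: inj_on_def kappa_def)
  define W where "W = mprod ml1 (mprod k1 X0 Y1) (mprod k4 P2 Q3) i j"
  define W' where "W' = mprod k3 (mprod k1 X0 P1) (mprod k4 Y2 Q3) i j"
  define G where "G = (\<lambda>w. inv_into S\<phi> (kappa \<circ> \<phi>) (take 2 w) @ inv_into S\<phi> \<phi> (drop 2 w))"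
  define E where "E = (\<lambda>w::word. enc2 (take 2 w) @ enc2 (drop 2 w))"
  define \<tau> where "\<tau> = (\<lambda>w::word. rev (take 2 w) @ drop 2 w)"
  define \<sigma> where "\<sigma> = (\<lambda>w::word. take 1 w @ \<tau> (drop 1 w))"
  have lXY: "lover 2 ml ml1 (mprod k1 X0 Y1)"
    using lover_mprod[OF over_lover[OF oX0] over_lover[OF oY1]] by (simp add: numeral_2_eq_2)
  have lXP: "lover 2 ml k3 (mprod k1 X0 P1)"
    using lover_mprod[OF over_lover[OF oX0] over_lover[OF oP1]] by (simp add: numeral_2_eq_2)
  have lYP: "lover 2 k1 k4 (mprod ml1 Y1 P2)"
    using lover_mprod[OF over_lover[OF oY1] over_lover[OF oP2]] by (simp add: numeral_2_eq_2)
  have L: "mprod ml1 Mm0 Mp1 i j = image_mset G W"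
    unfolding W_def
  proof (rule image_mprod)
    show "\<forall>t<ml1. Mm0 i t = image_mset (inv_into S\<phi> (kappa \<circ> \<phi>)) (mprod k1 X0 Y1 i t)"
      using sim_inv[OF sc injk] ij by auto
    show "\<forall>t<ml1. Mp1 t j = image_mset (inv_into S\<phi> \<phi>) (mprod k4 P2 Q3 t j)"
      using sim_inv[OF sa injp] ij by auto
    show "\<forall>t<ml1. \<forall>u\<in>#mprod k1 X0 Y1 i t. \<forall>v\<in>#mprod k4 P2 Q3 t j.
        G (u @ v) = inv_into S\<phi> (kappa \<circ> \<phi>) u @ inv_into S\<phi> \<phi> v"
      using loverD[OF lXY] ij by (auto simp: G_def)
  qed
  have R: "mprod k3 (\<lambda>i t. image_mset enc2 (mprod k1 X0 P1 i t)) (\<lambda>t j. image_mset enc2 (mprod k4 Y2 Q3 t j)) i j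
      = image_mset E W'"
    unfolding W'_def
    by (rule image_mprod) (use loverD[OF lXP] ij in \<open>auto simp: E_def\<close>)
  have W2: "W = mprod k1 X0 (mprod k4 (mprod ml1 Y1 P2) Q3) i j"
    unfolding W_def mprod_assoc ..
  have W'2: "W' = mprod k1 X0 (mprod k4 (mprod k3 P1 Y2) Q3) i j"
    unfolding W'_def mprod_assoc ..
  have inner: "\<forall>s<k1. mprod k4 (mprod k3 P1 Y2) Q3 s j = image_mset \<tau> (mprod k4 (mprod ml1 Y1 P2) Q3 s j)"
  proof (intro allI impI)
    fix s assume s: "s < k1"
    show "mprod k4 (mprod k3 P1 Y2) Q3 s j = image_mset \<tau> (mprod k4 (mprod ml1 Y1 P2) Q3 s j)"
    proof (rule image_mprod[where g=rev and h="\<lambda>x. x"])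
      show "\<forall>t<k4. mprod k3 P1 Y2 s t = image_mset rev (mprod ml1 Y1 P2 s t)"
        using sim_rev'[OF se] s by auto
    qed (use loverD[OF lYP] s in \<open>auto simp: \<tau>_def\<close>)
  qed
  have W'3: "W' = image_mset \<sigma> W"
    unfolding W2 W'2
  proof (rule image_mprod[where g="\<lambda>x. x" and h=\<tau>])
    show "\<forall>t<k1. \<forall>u\<in>#X0 i t. \<forall>v\<in>#mprod k4 (mprod ml1 Y1 P2) Q3 t j. \<sigma> (u @ v) = u @ \<tau> v"
      using loverD[OF over_lover[OF oX0]] ij by (auto simp: \<sigma>_def)
  qed (use inner in auto)
  have pw: "\<forall>w\<in>#W. G w \<in> S1 S\<phi> \<and> phi1 \<phi> (G w) = E (\<sigma> w)"
  proof
    fix w assume "w \<in># W"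
    then obtain t u v where t: "t < ml1" and u: "u \<in># mprod k1 X0 Y1 i t" and v: "v \<in># mprod k4 P2 Q3 t j"
      and w: "w = u @ v" unfolding W_def by (blast dest: set_mprod)
    obtain a where a: "a \<in> S\<phi>" "u = (kappa \<circ> \<phi>) a" using sim_in[OF sc ij(1) t u] by blast
    obtain b where b: "b \<in> S\<phi>" "v = \<phi> b" using sim_in[OF sa t ij(2) v] by blast
    obtain a0 a1 a2 where A: "a = [a0]" "\<phi> a = [a1,a2]" using spec_elem[OF spec a(1)] by blast
    obtain b0 b1 b2 where B: "b = [b0]" "\<phi> b = [b1,b2]" using spec_elem[OF spec b(1)] by blast
    have u2: "u = [a2,a1]" using a A by (simp add: kappa_def)
    have ia: "inv_into S\<phi> (kappa \<circ> \<phi>) u = a" using a injk inv_into_f_f[OF injk a(1)] by simp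
    have ib: "inv_into S\<phi> \<phi> v = b" using b injp by (simp add: inv_into_f_f)
    have Gw: "G w = [a0,b0]"
      using ia ib A B u2 by (simp add: G_def w)
    show "G w \<in> S1 S\<phi> \<and> phi1 \<phi> (G w) = E (\<sigma> w)"
    proof -
      have ww: "w = [a2,a1,b1,b2]" using w u2 b(2) B by simp
      show ?thesis using a b A B Gw by (simp add: S1_def phi1_def E_def \<sigma>_def \<tau>_def enc2_def ww numeral_2_eq_2 numeral_3_eq_3)
    qed
  qed
  show ?thesis
  proof
    show "set_mset (mprod ml1 Mm0 Mp1 i j) \<subseteq> S1 S\<phi>" using pw L by auto
    have "image_mset (phi1 \<phi>) (image_mset G W) = image_mset E (image_mset \<sigma> W)"
      unfolding image_mset.compositionality using pw by (intro image_mset_cong) auto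
    then show "mprod k3 (\<lambda>i t. image_mset enc2 (mprod k1 X0 P1 i t)) (\<lambda>t j. image_mset enc2 (mprod k4 Y2 Q3 t j)) i j
       = image_mset (phi1 \<phi>) (mprod ml1 Mm0 Mp1 i j)"
      using L R W'3 by simp
  qed
qed

definition phiCp :: "(word \<Rightarrow> word) \<Rightarrow> word set \<Rightarrow> (word \<Rightarrow> word) \<Rightarrow> word \<Rightarrow> word" where
  "phiCp \<phi> S\<psi> \<psi> w = [prod_encode (fst (prod_decode (w!1)), \<phi> [w!0] ! 0)] @
      inv_into S\<psi> \<psi> [\<phi> [w!0] ! 1, snd (prod_decode (w!1))]"

definition SCp :: "nat set \<Rightarrow> nat set \<Rightarrow> word set \<Rightarrow> (word \<Rightarrow> word) \<Rightarrow> word set \<Rightarrow> (word \<Rightarrow> word) \<Rightarrow> word set" where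
  "SCp C D S\<phi> \<phi> S\<psi> \<psi> = {[b, prod_encode (x,p2)] | b x p2. [b] \<in> S\<phi> \<and> x \<in> D \<and> p2 \<in> C \<and> [\<phi> [b] ! 1, p2] \<in> \<psi> ` S\<psi>}"

definition phiCm :: "(word \<Rightarrow> word) \<Rightarrow> word set \<Rightarrow> (word \<Rightarrow> word) \<Rightarrow> word \<Rightarrow> word" where
  "phiCm \<phi> S\<psi> \<psi> w = [prod_encode (\<phi> [w!0] ! 1, snd (prod_decode (w!1)))] @
      inv_into S\<psi> (kappa \<circ> \<psi>) [\<phi> [w!0] ! 0, fst (prod_decode (w!1))]"

definition SCm :: "nat set \<Rightarrow> nat set \<Rightarrow> word set \<Rightarrow> (word \<Rightarrow> word) \<Rightarrow> word set \<Rightarrow> (word \<Rightarrow> word) \<Rightarrow> word set" where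
  "SCm C D S\<phi> \<phi> S\<psi> \<psi> = {[a, prod_encode (x,p)] | a x p. [a] \<in> S\<phi> \<and> x \<in> D \<and> p \<in> C \<and> [\<phi> [a] ! 0, x] \<in> (kappa \<circ> \<psi>) ` S\<psi>}"

lemma coreCp:
  fixes \<phi> \<psi> :: "word \<Rightarrow> word"
  assumes spec: "is_spec (words1 SM) (words2 C D) S\<phi> \<phi>"
    and specN: "is_spec (words1 SN) (words2 D C) S\<psi> \<psi>"
    and oP0: "over C c0 d1 P0" and oQ1: "over D d1 c2 Q1" and oX2: "over D c2 c3 X2"
    and oP3: "over C c3 d4 P3" and oX0: "over D c0 c1 X0" and oP1: "over C c1 d2 P1"
    and oQ2: "over D d2 c3 Q2" and oX1: "over D d1 d2 X1"
    and sa: "sim S\<phi> \<phi> c0 c2 Mp0 c0 c2 (mprod d1 P0 Q1)"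
    and sb: "sim S\<psi> \<psi> d2 d4 Np1 d2 d4 (mprod c3 Q2 P3)"
    and sf: "sim (words2 D D) kappa d1 c3 (mprod d2 X1 Q2) d1 c3 (mprod c2 Q1 X2)"
    and sg: "sim (words2 D C) kappa c0 d2 (mprod c1 X0 P1) c0 d2 (mprod d1 P0 X1)"
    and ij: "i < c0" "j < d4"
  shows "set_mset (mprod c2 Mp0 (\<lambda>t j. image_mset enc2 (mprod c3 X2 P3 t j)) i j) \<subseteq> SCp C D S\<phi> \<phi> S\<psi> \<psi> \<and>
     mprod d2 (\<lambda>i t. image_mset enc2 (mprod c1 X0 P1 i t)) Np1 i j
       = image_mset (phiCp \<phi> S\<psi> \<psi>) (mprod c2 Mp0 (\<lambda>t j. image_mset enc2 (mprod c3 X2 P3 t j)) i j)"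
proof -
  have injp: "inj_on \<phi> S\<phi>" using spec by (simp add: is_spec_def)
  have injq: "inj_on \<psi> S\<psi>" using specN by (simp add: is_spec_def)
  define W where "W = mprod c2 (mprod d1 P0 Q1) (mprod c3 X2 P3) i j"
  define W' where "W' = mprod d2 (mprod c1 X0 P1) (mprod c3 Q2 P3) i j"
  define G where "G = (\<lambda>w. inv_into S\<phi> \<phi> (take 2 w) @ enc2 (drop 2 w))"
  define E where "E = (\<lambda>w::word. enc2 (take 2 w) @ inv_into S\<psi> \<psi> (drop 2 w))"
  define \<tau> where "\<tau> = (\<lambda>w::word. rev (take 2 w) @ drop 2 w)"
  define \<sigma>1 where "\<sigma>1 = (\<lambda>w::word. take 1 w @ \<tau> (drop 1 w))"
  have lPQ: "lover 2 c0 c2 (mprod d1 P0 Q1)"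
    using lover_mprod[OF over_lover[OF oP0] over_lover[OF oQ1]] by (simp add: numeral_2_eq_2)
  have lXP: "lover 2 c0 d2 (mprod c1 X0 P1)"
    using lover_mprod[OF over_lover[OF oX0] over_lover[OF oP1]] by (simp add: numeral_2_eq_2)
  have lQX: "lover 2 d1 c3 (mprod c2 Q1 X2)"
    using lover_mprod[OF over_lover[OF oQ1] over_lover[OF oX2]] by (simp add: numeral_2_eq_2)
  have lPX: "lover 2 c0 d2 (mprod d1 P0 X1)"
    using lover_mprod[OF over_lover[OF oP0] over_lover[OF oX1]] by (simp add: numeral_2_eq_2)
  have L: "mprod c2 Mp0 (\<lambda>t j. image_mset enc2 (mprod c3 X2 P3 t j)) i j = image_mset G W"
    unfolding W_def
  proof (rule image_mprod)
    show "\<forall>t<c2. Mp0 i t = image_mset (inv_into S\<phi> \<phi>) (mprod d1 P0 Q1 i t)"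
      using sim_inv[OF sa injp] ij by auto
  qed (use loverD[OF lPQ] ij in \<open>auto simp: G_def\<close>)
  have R: "mprod d2 (\<lambda>i t. image_mset enc2 (mprod c1 X0 P1 i t)) Np1 i j = image_mset E W'"
    unfolding W'_def
  proof (rule image_mprod)
    show "\<forall>t<d2. Np1 t j = image_mset (inv_into S\<psi> \<psi>) (mprod c3 Q2 P3 t j)"
      using sim_inv[OF sb injq] ij by auto
  qed (use loverD[OF lXP] ij in \<open>auto simp: E_def\<close>)
  have W2: "W = mprod d1 P0 (mprod c3 (mprod c2 Q1 X2) P3) i j"
    unfolding W_def mprod_assoc ..
  have inner: "\<forall>s<d1. mprod c3 (mprod d2 X1 Q2) P3 s j = image_mset \<tau> (mprod c3 (mprod c2 Q1 X2) P3 s j)"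
  proof (intro allI impI)
    fix s assume s: "s < d1"
    show "mprod c3 (mprod d2 X1 Q2) P3 s j = image_mset \<tau> (mprod c3 (mprod c2 Q1 X2) P3 s j)"
    proof (rule image_mprod[where g=rev and h="\<lambda>x. x"])
      show "\<forall>t<c3. mprod d2 X1 Q2 s t = image_mset rev (mprod c2 Q1 X2 s t)"
        using sim_rev[OF sf] s by auto
    qed (use loverD[OF lQX] s in \<open>auto simp: \<tau>_def\<close>)
  qed
  have V: "mprod d2 (mprod d1 P0 X1) (mprod c3 Q2 P3) i j = image_mset \<sigma>1 W"
  proof -
    have "mprod d2 (mprod d1 P0 X1) (mprod c3 Q2 P3) i j = mprod d1 P0 (mprod c3 (mprod d2 X1 Q2) P3) i j"
      unfolding mprod_assoc ..
    also have "\<dots> = image_mset \<sigma>1 W"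
      unfolding W2
    proof (rule image_mprod[where g="\<lambda>x. x" and h=\<tau>])
      show "\<forall>t<d1. \<forall>u\<in>#P0 i t. \<forall>v\<in>#mprod c3 (mprod c2 Q1 X2) P3 t j. \<sigma>1 (u @ v) = u @ \<tau> v"
        using loverD[OF over_lover[OF oP0]] ij by (auto simp: \<sigma>1_def)
    qed (use inner in auto)
    finally show ?thesis .
  qed
  have W'3: "W' = image_mset (\<tau> \<circ> \<sigma>1) W"
  proof -
    have "W' = image_mset \<tau> (mprod d2 (mprod d1 P0 X1) (mprod c3 Q2 P3) i j)"
      unfolding W'_def
    proof (rule image_mprod[where g=rev and h="\<lambda>x. x"])
      show "\<forall>t<d2. mprod c1 X0 P1 i t = image_mset rev (mprod d1 P0 X1 i t)"
        using sim_rev[OF sg] ij by auto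
    qed (use loverD[OF lPX] ij in \<open>auto simp: \<tau>_def\<close>)
    then show ?thesis using V by (simp add: image_mset.compositionality)
  qed
  have pw: "\<forall>w\<in>#W. G w \<in> SCp C D S\<phi> \<phi> S\<psi> \<psi> \<and> phiCp \<phi> S\<psi> \<psi> (G w) = E ((\<tau> \<circ> \<sigma>1) w)"
  proof
    fix w assume wW: "w \<in># W"
    then obtain t u v where t: "t < c2" and u: "u \<in># mprod d1 P0 Q1 i t" and v: "v \<in># mprod c3 X2 P3 t j"
      and w: "w = u @ v" unfolding W_def by (blast dest: set_mprod)
    obtain b where b: "b \<in> S\<phi>" "u = \<phi> b" using sim_in[OF sa ij(1) t u] by blast
    obtain b0 p q where B: "b = [b0]" "\<phi> b = [p,q]" using spec_elem[OF spec b(1)] by blast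
    obtain x p2 where xp: "v = [x,p2]" "x \<in> D" "p2 \<in> C"
      using over_mprod2[OF oX2 oP3 t ij(2) v] by blast
    have ww: "w = [p,q,x,p2]" using w b B xp by simp
    have sw: "(\<tau> \<circ> \<sigma>1) w = [x,p,q,p2]" by (simp add: ww \<tau>_def \<sigma>1_def)
    have "[x,p,q,p2] \<in># W'" using wW W'3 sw by (metis image_eqI set_image_mset)
    then obtain t' u' v' where t': "t' < d2" and u': "u' \<in># mprod c1 X0 P1 i t'"
      and v': "v' \<in># mprod c3 Q2 P3 t' j" and w': "[x,p,q,p2] = u' @ v'"
      unfolding W'_def by (blast dest: set_mprod)
    have "length u' = 2" using loverD[OF lXP ij(1) t' u'] .
    then have "v' = drop 2 (u' @ v')" by simp
    then have v'e: "v' = [q,p2]" unfolding w'[symmetric] by (simp add: numeral_2_eq_2)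
    obtain n where n: "n \<in> S\<psi>" "v' = \<psi> n" using sim_in[OF sb t' ij(2) v'] by blast
    have ib: "inv_into S\<phi> \<phi> u = b" using b injp inv_into_f_f[OF injp b(1)] by simp
    have Gw: "G w = [b0, prod_encode (x,p2)]"
      using ib B xp b by (simp add: G_def w enc2_def)
    show "G w \<in> SCp C D S\<phi> \<phi> S\<psi> \<psi> \<and> phiCp \<phi> S\<psi> \<psi> (G w) = E ((\<tau> \<circ> \<sigma>1) w)"
    proof
      show "G w \<in> SCp C D S\<phi> \<phi> S\<psi> \<psi>" unfolding Gw SCp_def using b B xp n v'e by auto
      show "phiCp \<phi> S\<psi> \<psi> (G w) = E ((\<tau> \<circ> \<sigma>1) w)"
        unfolding Gw sw using b B by (simp add: phiCp_def E_def enc2_def numeral_2_eq_2)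
    qed
  qed
  show ?thesis
  proof
    show "set_mset (mprod c2 Mp0 (\<lambda>t j. image_mset enc2 (mprod c3 X2 P3 t j)) i j) \<subseteq> SCp C D S\<phi> \<phi> S\<psi> \<psi>"
      using pw L by auto
    have "image_mset (phiCp \<phi> S\<psi> \<psi>) (image_mset G W) = image_mset E (image_mset (\<tau> \<circ> \<sigma>1) W)"
      unfolding image_mset.compositionality using pw by (intro image_mset_cong) auto
    then show "mprod d2 (\<lambda>i t. image_mset enc2 (mprod c1 X0 P1 i t)) Np1 i j
       = image_mset (phiCp \<phi> S\<psi> \<psi>) (mprod c2 Mp0 (\<lambda>t j. image_mset enc2 (mprod c3 X2 P3 t j)) i j)"
      using L R W'3 by simp
  qed
qed

lemma coreCm:
  fixes \<phi> \<psi> :: "word \<Rightarrow> word"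
  assumes spec: "is_spec (words1 SM) (words2 C D) S\<phi> \<phi>"
    and specN: "is_spec (words1 SN) (words2 D C) S\<psi> \<psi>"
    and oX0: "over D c0 c1 X0" and oY1: "over C c1 c2 Y1" and oX2: "over D c2 c3 X2"
    and oP3: "over C c3 d4 P3" and oP1: "over C c1 d2 P1" and oP2: "over C c2 d3 P2"
    and oY2: "over C d2 d3 Y2" and oX3: "over D d3 d4 X3"
    and sc: "sim S\<phi> (kappa \<circ> \<phi>) c0 c2 Mm0 c0 c2 (mprod c1 X0 Y1)"
    and sd: "sim S\<psi> (kappa \<circ> \<psi>) d2 d4 Nm1 d2 d4 (mprod d3 Y2 X3)"
    and sg: "sim (words2 D C) kappa c2 d4 (mprod c3 X2 P3) c2 d4 (mprod d3 P2 X3)"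
    and se: "sim (words2 C C) kappa c1 d3 (mprod c2 Y1 P2) c1 d3 (mprod d2 P1 Y2)"
    and ij: "i < c0" "j < d4"
  shows "set_mset (mprod c2 Mm0 (\<lambda>t j. image_mset enc2 (mprod c3 X2 P3 t j)) i j) \<subseteq> SCm C D S\<phi> \<phi> S\<psi> \<psi> \<and>
     mprod d2 (\<lambda>i t. image_mset enc2 (mprod c1 X0 P1 i t)) Nm1 i j
       = image_mset (phiCm \<phi> S\<psi> \<psi>) (mprod c2 Mm0 (\<lambda>t j. image_mset enc2 (mprod c3 X2 P3 t j)) i j)"
proof -
  have injp: "inj_on \<phi> S\<phi>" using spec by (simp add: is_spec_def)
  have injq: "inj_on \<psi> S\<psi>" using specN by (simp add: is_spec_def)
  have injkp: "inj_on (kappa \<circ> \<phi>) S\<phi>" using injp by (auto simp: inj_on_def kappa_def)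
  have injkq: "inj_on (kappa \<circ> \<psi>) S\<psi>" using injq by (auto simp: inj_on_def kappa_def)
  define W where "W = mprod c2 (mprod c1 X0 Y1) (mprod c3 X2 P3) i j"
  define W' where "W' = mprod d2 (mprod c1 X0 P1) (mprod d3 Y2 X3) i j"
  define G where "G = (\<lambda>w. inv_into S\<phi> (kappa \<circ> \<phi>) (take 2 w) @ enc2 (drop 2 w))"
  define E where "E = (\<lambda>w::word. enc2 (take 2 w) @ inv_into S\<psi> (kappa \<circ> \<psi>) (drop 2 w))"
  define \<tau> where "\<tau> = (\<lambda>w::word. rev (take 2 w) @ drop 2 w)"
  define \<sigma>1 where "\<sigma>1 = (\<lambda>w::word. take 2 w @ rev (drop 2 w))"
  define \<sigma>2 where "\<sigma>2 = (\<lambda>w::word. take 1 w @ \<tau> (drop 1 w))"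
  have lXY: "lover 2 c0 c2 (mprod c1 X0 Y1)"
    using lover_mprod[OF over_lover[OF oX0] over_lover[OF oY1]] by (simp add: numeral_2_eq_2)
  have lXP: "lover 2 c0 d2 (mprod c1 X0 P1)"
    using lover_mprod[OF over_lover[OF oX0] over_lover[OF oP1]] by (simp add: numeral_2_eq_2)
  have lYP: "lover 2 c1 d3 (mprod c2 Y1 P2)"
    using lover_mprod[OF over_lover[OF oY1] over_lover[OF oP2]] by (simp add: numeral_2_eq_2)
  have L: "mprod c2 Mm0 (\<lambda>t j. image_mset enc2 (mprod c3 X2 P3 t j)) i j = image_mset G W"
    unfolding W_def
  proof (rule image_mprod)
    show "\<forall>t<c2. Mm0 i t = image_mset (inv_into S\<phi> (kappa \<circ> \<phi>)) (mprod c1 X0 Y1 i t)"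
      using sim_inv[OF sc injkp] ij by auto
  qed (use loverD[OF lXY] ij in \<open>auto simp: G_def\<close>)
  have R: "mprod d2 (\<lambda>i t. image_mset enc2 (mprod c1 X0 P1 i t)) Nm1 i j = image_mset E W'"
    unfolding W'_def
  proof (rule image_mprod)
    show "\<forall>t<d2. Nm1 t j = image_mset (inv_into S\<psi> (kappa \<circ> \<psi>)) (mprod d3 Y2 X3 t j)"
      using sim_inv[OF sd injkq] ij by auto
  qed (use loverD[OF lXP] ij in \<open>auto simp: E_def\<close>)
  have V1: "mprod c2 (mprod c1 X0 Y1) (mprod d3 P2 X3) i j = image_mset \<sigma>1 W"
    unfolding W_def
  proof (rule image_mprod[where g="\<lambda>x. x" and h=rev])
    show "\<forall>t<c2. mprod d3 P2 X3 t j = image_mset rev (mprod c3 X2 P3 t j)"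
      using sim_rev'[OF sg] ij by auto
  qed (use loverD[OF lXY] ij in \<open>auto simp: \<sigma>1_def\<close>)
  have inner: "\<forall>s<c1. mprod d3 (mprod d2 P1 Y2) X3 s j = image_mset \<tau> (mprod d3 (mprod c2 Y1 P2) X3 s j)"
  proof (intro allI impI)
    fix s assume s: "s < c1"
    show "mprod d3 (mprod d2 P1 Y2) X3 s j = image_mset \<tau> (mprod d3 (mprod c2 Y1 P2) X3 s j)"
    proof (rule image_mprod[where g=rev and h="\<lambda>x. x"])
      show "\<forall>t<d3. mprod d2 P1 Y2 s t = image_mset rev (mprod c2 Y1 P2 s t)"
        using sim_rev'[OF se] s by auto
    qed (use loverD[OF lYP] s in \<open>auto simp: \<tau>_def\<close>)
  qed
  have W'3: "W' = image_mset (\<sigma>2 \<circ> \<sigma>1) W"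
  proof -
    have "W' = mprod c1 X0 (mprod d3 (mprod d2 P1 Y2) X3) i j"
      unfolding W'_def mprod_assoc ..
    also have "\<dots> = image_mset \<sigma>2 (mprod c1 X0 (mprod d3 (mprod c2 Y1 P2) X3) i j)"
    proof (rule image_mprod[where g="\<lambda>x. x" and h=\<tau>])
      show "\<forall>t<c1. \<forall>u\<in>#X0 i t. \<forall>v\<in>#mprod d3 (mprod c2 Y1 P2) X3 t j. \<sigma>2 (u @ v) = u @ \<tau> v"
        using loverD[OF over_lover[OF oX0]] ij by (auto simp: \<sigma>2_def)
    qed (use inner in auto)
    also have "mprod c1 X0 (mprod d3 (mprod c2 Y1 P2) X3) i j = mprod c2 (mprod c1 X0 Y1) (mprod d3 P2 X3) i j"
      unfolding mprod_assoc ..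
    finally show ?thesis using V1 by (simp add: image_mset.compositionality)
  qed
  have pw: "\<forall>w\<in>#W. G w \<in> SCm C D S\<phi> \<phi> S\<psi> \<psi> \<and> phiCm \<phi> S\<psi> \<psi> (G w) = E ((\<sigma>2 \<circ> \<sigma>1) w)"
  proof
    fix w assume wW: "w \<in># W"
    then obtain t u v where t: "t < c2" and u: "u \<in># mprod c1 X0 Y1 i t" and v: "v \<in># mprod c3 X2 P3 t j"
      and w: "w = u @ v" unfolding W_def by (blast dest: set_mprod)
    obtain a where a: "a \<in> S\<phi>" "u = (kappa \<circ> \<phi>) a" using sim_in[OF sc ij(1) t u] by blast
    obtain a0 a1 a2 where A: "a = [a0]" "\<phi> a = [a1,a2]" "a1 \<in> C" "a2 \<in> D" using spec_elem[OF spec a(1)] by blast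
    obtain x p2 where xp: "v = [x,p2]" "x \<in> D" "p2 \<in> C"
      using over_mprod2[OF oX2 oP3 t ij(2) v] by blast
    have ww: "w = [a2,a1,x,p2]" using w a A xp by (simp add: kappa_def)
    have sw: "(\<sigma>2 \<circ> \<sigma>1) w = [a2,p2,a1,x]" by (simp add: ww \<tau>_def \<sigma>1_def \<sigma>2_def numeral_2_eq_2)
    have "[a2,p2,a1,x] \<in># W'" using wW W'3 sw by (metis image_eqI set_image_mset)
    then obtain t' u' v' where t': "t' < d2" and u': "u' \<in># mprod c1 X0 P1 i t'"
      and v': "v' \<in># mprod d3 Y2 X3 t' j" and w': "[a2,p2,a1,x] = u' @ v'"
      unfolding W'_def by (blast dest: set_mprod)
    have "length u' = 2" using loverD[OF lXP ij(1) t' u'] .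
    then have "v' = drop 2 (u' @ v')" by simp
    then have v'e: "v' = [a1,x]" unfolding w'[symmetric] by (simp add: numeral_2_eq_2)
    obtain n where n: "n \<in> S\<psi>" "v' = (kappa \<circ> \<psi>) n" using sim_in[OF sd t' ij(2) v'] by blast
    have ia: "inv_into S\<phi> (kappa \<circ> \<phi>) u = a" using a inv_into_f_f[OF injkp a(1)] by simp
    have Gw: "G w = [a0, prod_encode (x,p2)]"
      using ia A xp a by (simp add: G_def w enc2_def kappa_def)
    show "G w \<in> SCm C D S\<phi> \<phi> S\<psi> \<psi> \<and> phiCm \<phi> S\<psi> \<psi> (G w) = E ((\<sigma>2 \<circ> \<sigma>1) w)"
    proof
      show "G w \<in> SCm C D S\<phi> \<phi> S\<psi> \<psi>" unfolding Gw SCm_def using a A xp n v'e by auto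
      show "phiCm \<phi> S\<psi> \<psi> (G w) = E ((\<sigma>2 \<circ> \<sigma>1) w)"
        unfolding Gw sw using a A by (simp add: phiCm_def E_def enc2_def numeral_2_eq_2)
    qed
  qed
  show ?thesis
  proof
    show "set_mset (mprod c2 Mm0 (\<lambda>t j. image_mset enc2 (mprod c3 X2 P3 t j)) i j) \<subseteq> SCm C D S\<phi> \<phi> S\<psi> \<psi>"
      using pw L by auto
    have "image_mset (phiCm \<phi> S\<psi> \<psi>) (image_mset G W) = image_mset E (image_mset (\<sigma>2 \<circ> \<sigma>1) W)"
      unfolding image_mset.compositionality using pw by (intro image_mset_cong) auto
    then show "mprod d2 (\<lambda>i t. image_mset enc2 (mprod c1 X0 P1 i t)) Nm1 i j
       = image_mset (phiCm \<phi> S\<psi> \<psi>) (mprod c2 Mm0 (\<lambda>t j. image_mset enc2 (mprod c3 X2 P3 t j)) i j)"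
      using L R W'3 by simp
  qed
qed

definition Hm :: "(nat \<Rightarrow> nat) \<Rightarrow> (nat \<Rightarrow> smat) \<Rightarrow> (nat \<Rightarrow> smat) \<Rightarrow> nat \<Rightarrow> smat" where
  "Hm c X P l = (\<lambda>i j. image_mset enc2 (mprod (c (2*l+1)) (X (2*l)) (P (2*l+1)) i j))"

lemma half:
  fixes \<phi> \<psi> :: "word \<Rightarrow> word"
  assumes spec: "is_spec (words1 SM) (words2 C D) S\<phi> \<phi>"
    and specN: "is_spec (words1 SN) (words2 D C) S\<psi> \<psi>"
    and hP: "\<forall>l. over C (c l) (d (Suc l)) (P l)"
    and hQ: "\<forall>l. over D (d l) (c (Suc l)) (Q l)"
    and hX0: "\<forall>l. over D (c (2*l)) (c (2*l+1)) (X (2*l))"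
    and hX1: "\<forall>l. over D (d (2*l+1)) (d (2*l+2)) (X (2*l+1))"
    and hY0: "\<forall>l. over C (d (2*l)) (d (2*l+1)) (Y (2*l))"
    and hY1: "\<forall>l. over C (c (2*l+1)) (c (2*l+2)) (Y (2*l+1))"
    and ha: "\<forall>l. sim S\<phi> \<phi> (m l) (m (Suc l)) (Mp l) (c (2*l)) (c (2*l+2)) (mprod (d (2*l+1)) (P (2*l)) (Q (2*l+1)))"
    and hb: "\<forall>l. sim S\<psi> \<psi> (n l) (n (Suc l)) (Np l) (d (2*l)) (d (2*l+2)) (mprod (c (2*l+1)) (Q (2*l)) (P (2*l+1)))"
    and hc: "\<forall>l. sim S\<phi> (kappa \<circ> \<phi>) (m l) (m (Suc l)) (Mm l) (c (2*l)) (c (2*l+2)) (mprod (c (2*l+1)) (X (2*l)) (Y (2*l+1)))"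
    and hd: "\<forall>l. sim S\<psi> (kappa \<circ> \<psi>) (n l) (n (Suc l)) (Nm l) (d (2*l)) (d (2*l+2)) (mprod (d (2*l+1)) (Y (2*l)) (X (2*l+1)))"
    and he: "\<forall>l. sim (words2 C C) kappa (c (2*l+1)) (d (2*l+3)) (mprod (c (2*l+2)) (Y (2*l+1)) (P (2*l+2))) (c (2*l+1)) (d (2*l+3)) (mprod (d (2*l+2)) (P (2*l+1)) (Y (2*l+2)))"
    and hf: "\<forall>l. sim (words2 D D) kappa (d (2*l+1)) (c (2*l+3)) (mprod (d (2*l+2)) (X (2*l+1)) (Q (2*l+2))) (d (2*l+1)) (c (2*l+3)) (mprod (c (2*l+2)) (Q (2*l+1)) (X (2*l+2)))"
    and hg: "\<forall>l. sim (words2 D C) kappa (c (2*l)) (d (2*l+2)) (mprod (c (2*l+1)) (X (2*l)) (P (2*l+1))) (c (2*l)) (d (2*l+2)) (mprod (d (2*l+1)) (P (2*l)) (X (2*l+1)))"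
  shows "over (prod_encode ` (D \<times> C)) (m l) (n (Suc l)) (Hm c X P l) \<and>
   sim (S1 S\<phi>) (phi1 \<phi>) (m l) (m (l+2)) (mprod (m (Suc l)) (Mm l) (Mp (Suc l)))
        (m l) (m (l+2)) (mprod (n (Suc l)) (Hm c X P l) (Hm d Y Q (Suc l))) \<and>
   sim (SCp C D S\<phi> \<phi> S\<psi> \<psi>) (phiCp \<phi> S\<psi> \<psi>) (m l) (n (l+2)) (mprod (m (Suc l)) (Mp l) (Hm c X P (Suc l)))
        (m l) (n (l+2)) (mprod (n (Suc l)) (Hm c X P l) (Np (Suc l))) \<and>
   sim (SCm C D S\<phi> \<phi> S\<psi> \<psi>) (phiCm \<phi> S\<psi> \<psi>) (m l) (n (l+2)) (mprod (m (Suc l)) (Mm l) (Hm c X P (Suc l)))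
        (m l) (n (l+2)) (mprod (n (Suc l)) (Hm c X P l) (Nm (Suc l)))"
proof -
  have mdim: "\<And>l. m l = c (2*l)" using ha sim_dims by blast
  have ndim: "\<And>l. n l = d (2*l)" using hb sim_dims by blast
  have m0: "m l = c (2*l)" and m1: "m (Suc l) = c (2*l+2)" and m2: "m (l+2) = c (2*l+4)"
    and n1: "n (Suc l) = d (2*l+2)" and n2: "n (l+2) = d (2*l+4)"
    using mdim[of "l+2"] ndim[of "l+2"] by (simp_all add: mdim ndim add.commute[of _ 4] numeral_eq_Suc)
  have H0: "Hm c X P l = (\<lambda>i j. image_mset enc2 (mprod (c (2*l+1)) (X (2*l)) (P (2*l+1)) i j))"
    by (simp add: Hm_def numeral_eq_Suc)
  have H1: "Hm c X P (Suc l) = (\<lambda>i j. image_mset enc2 (mprod (c (2*l+3)) (X (2*l+2)) (P (2*l+3)) i j))"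
    by (simp add: Hm_def numeral_eq_Suc)
  have K1: "Hm d Y Q (Suc l) = (\<lambda>i j. image_mset enc2 (mprod (d (2*l+3)) (Y (2*l+2)) (Q (2*l+3)) i j))"
    by (simp add: Hm_def numeral_eq_Suc)
  have oX0: "over D (c (2*l)) (c (2*l+1)) (X (2*l))" using hX0 by blast
  have oX1: "over D (d (2*l+1)) (d (2*l+2)) (X (2*l+1))" using hX1 by blast
  have oY1: "over C (c (2*l+1)) (c (2*l+2)) (Y (2*l+1))" using hY1 by blast
  have oX2: "over D (c (2*l+2)) (c (2*l+3)) (X (2*l+2))" using hX0[rule_format, of "Suc l"] by (simp add: numeral_eq_Suc)
  have oX3: "over D (d (2*l+3)) (d (2*l+4)) (X (2*l+3))" using hX1[rule_format, of "Suc l"] by (simp add: numeral_eq_Suc)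
  have oY2: "over C (d (2*l+2)) (d (2*l+3)) (Y (2*l+2))" using hY0[rule_format, of "Suc l"] by (simp add: numeral_eq_Suc)
  have oP0: "over C (c (2*l)) (d (2*l+1)) (P (2*l))" using hP[rule_format, of "2*l"] by (simp add: numeral_eq_Suc)
  have oP1: "over C (c (2*l+1)) (d (2*l+2)) (P (2*l+1))" using hP[rule_format, of "2*l+1"] by (simp add: numeral_eq_Suc)
  have oP2: "over C (c (2*l+2)) (d (2*l+3)) (P (2*l+2))" using hP[rule_format, of "2*l+2"] by (simp add: numeral_eq_Suc)
  have oP3: "over C (c (2*l+3)) (d (2*l+4)) (P (2*l+3))" using hP[rule_format, of "2*l+3"] by (simp add: numeral_eq_Suc)
  have oQ1: "over D (d (2*l+1)) (c (2*l+2)) (Q (2*l+1))" using hQ[rule_format, of "2*l+1"] by (simp add: numeral_eq_Suc)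
  have oQ2: "over D (d (2*l+2)) (c (2*l+3)) (Q (2*l+2))" using hQ[rule_format, of "2*l+2"] by (simp add: numeral_eq_Suc)
  have oQ3: "over D (d (2*l+3)) (c (2*l+4)) (Q (2*l+3))" using hQ[rule_format, of "2*l+3"] by (simp add: numeral_eq_Suc)
  have sa0: "sim S\<phi> \<phi> (c (2*l)) (c (2*l+2)) (Mp l) (c (2*l)) (c (2*l+2)) (mprod (d (2*l+1)) (P (2*l)) (Q (2*l+1)))"
    using ha[rule_format, of l] by (simp add: mdim numeral_eq_Suc)
  have sa1: "sim S\<phi> \<phi> (c (2*l+2)) (c (2*l+4)) (Mp (Suc l)) (c (2*l+2)) (c (2*l+4)) (mprod (d (2*l+3)) (P (2*l+2)) (Q (2*l+3)))"
    using ha[rule_format, of "Suc l"] by (simp add: mdim numeral_eq_Suc)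
  have sb1: "sim S\<psi> \<psi> (d (2*l+2)) (d (2*l+4)) (Np (Suc l)) (d (2*l+2)) (d (2*l+4)) (mprod (c (2*l+3)) (Q (2*l+2)) (P (2*l+3)))"
    using hb[rule_format, of "Suc l"] by (simp add: ndim numeral_eq_Suc)
  have sc0: "sim S\<phi> (kappa \<circ> \<phi>) (c (2*l)) (c (2*l+2)) (Mm l) (c (2*l)) (c (2*l+2)) (mprod (c (2*l+1)) (X (2*l)) (Y (2*l+1)))"
    using hc[rule_format, of l] by (simp add: mdim numeral_eq_Suc)
  have sd1: "sim S\<psi> (kappa \<circ> \<psi>) (d (2*l+2)) (d (2*l+4)) (Nm (Suc l)) (d (2*l+2)) (d (2*l+4)) (mprod (d (2*l+3)) (Y (2*l+2)) (X (2*l+3)))"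
    using hd[rule_format, of "Suc l"] by (simp add: ndim numeral_eq_Suc)
  have se0: "sim (words2 C C) kappa (c (2*l+1)) (d (2*l+3)) (mprod (c (2*l+2)) (Y (2*l+1)) (P (2*l+2))) (c (2*l+1)) (d (2*l+3)) (mprod (d (2*l+2)) (P (2*l+1)) (Y (2*l+2)))"
    using he by blast
  have sf0: "sim (words2 D D) kappa (d (2*l+1)) (c (2*l+3)) (mprod (d (2*l+2)) (X (2*l+1)) (Q (2*l+2))) (d (2*l+1)) (c (2*l+3)) (mprod (c (2*l+2)) (Q (2*l+1)) (X (2*l+2)))"
    using hf by blast
  have sg0: "sim (words2 D C) kappa (c (2*l)) (d (2*l+2)) (mprod (c (2*l+1)) (X (2*l)) (P (2*l+1))) (c (2*l)) (d (2*l+2)) (mprod (d (2*l+1)) (P (2*l)) (X (2*l+1)))"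
    using hg by blast
  have sg1: "sim (words2 D C) kappa (c (2*l+2)) (d (2*l+4)) (mprod (c (2*l+3)) (X (2*l+2)) (P (2*l+3))) (c (2*l+2)) (d (2*l+4)) (mprod (d (2*l+3)) (P (2*l+2)) (X (2*l+3)))"
    using hg[rule_format, of "Suc l"] by (simp add: numeral_eq_Suc)
  note c1 = core1[OF spec oX0 oY1 oP2 oQ3 oP1 oY2 sc0 sa1 se0]
  note cp = coreCp[OF spec specN oP0 oQ1 oX2 oP3 oX0 oP1 oQ2 oX1 sa0 sb1 sf0 sg0]
  note cm = coreCm[OF spec specN oX0 oY1 oX2 oP3 oP1 oP2 oY2 oX3 sc0 sd1 sg1 se0]
  have ov: "over (prod_encode ` (D \<times> C)) (m l) (n (Suc l)) (Hm c X P l)"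
    unfolding m0 n1 H0 over_def words1_def
    using over_mprod2[OF oX0 oP1] by (fastforce simp: enc2_def)
  show ?thesis
    unfolding m0 m1 m2 n1 n2 H0 H1 K1 sim_def
    using ov[unfolded m0 n1 H0] c1 cp cm by blast
qed

lemma spec1:
  assumes spec: "is_spec (words1 SM) (words2 C D) S\<phi> \<phi>"
  shows "is_spec (words2 SM SM) (words2 (prod_encode ` (D \<times> C)) (prod_encode ` (C \<times> D))) (S1 S\<phi>) (phi1 \<phi>)"
proof -
  have inj: "inj_on \<phi> S\<phi>" using spec by (simp add: is_spec_def)
  have sub: "S1 S\<phi> \<subseteq> words2 SM SM"
    using spec unfolding S1_def is_spec_def words1_def words2_def by auto
  have img: "phi1 \<phi> ` S1 S\<phi> \<subseteq> words2 (prod_encode ` (D \<times> C)) (prod_encode ` (C \<times> D))"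
  proof
    fix y assume "y \<in> phi1 \<phi> ` S1 S\<phi>"
    then obtain a b where ab: "[a] \<in> S\<phi>" "[b] \<in> S\<phi>" "y = phi1 \<phi> [a,b]" unfolding S1_def by auto
    obtain a1 a2 where A: "\<phi> [a] = [a1,a2]" "a1 \<in> C" "a2 \<in> D" using spec_elem[OF spec ab(1)] by blast
    obtain b1 b2 where B: "\<phi> [b] = [b1,b2]" "b1 \<in> C" "b2 \<in> D" using spec_elem[OF spec ab(2)] by blast
    show "y \<in> words2 (prod_encode ` (D \<times> C)) (prod_encode ` (C \<times> D))"
      using A B ab(3) by (auto simp: phi1_def words2_def)
  qed
  have "inj_on (phi1 \<phi>) (S1 S\<phi>)"
  proof (rule inj_onI)
    fix x y assume x: "x \<in> S1 S\<phi>" and y: "y \<in> S1 S\<phi>" and e: "phi1 \<phi> x = phi1 \<phi> y"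
    obtain a b where ab: "[a] \<in> S\<phi>" "[b] \<in> S\<phi>" "x = [a,b]" using x unfolding S1_def by auto
    obtain a' b' where ab': "[a'] \<in> S\<phi>" "[b'] \<in> S\<phi>" "y = [a',b']" using y unfolding S1_def by auto
    obtain a1 a2 where A: "\<phi> [a] = [a1,a2]" using spec_elem[OF spec ab(1)] by blast
    obtain b1 b2 where B: "\<phi> [b] = [b1,b2]" using spec_elem[OF spec ab(2)] by blast
    obtain a1' a2' where A': "\<phi> [a'] = [a1',a2']" using spec_elem[OF spec ab'(1)] by blast
    obtain b1' b2' where B': "\<phi> [b'] = [b1',b2']" using spec_elem[OF spec ab'(2)] by blast
    have "a1 = a1' \<and> a2 = a2' \<and> b1 = b1' \<and> b2 = b2'"
      using e A B A' B' ab ab' by (simp add: phi1_def prod_encode_eq)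
    then have "\<phi> [a] = \<phi> [a']" "\<phi> [b] = \<phi> [b']" using A B A' B' by auto
    then have "[a] = [a']" "[b] = [b']" using inj ab ab' by (auto dest: inj_onD)
    then show "x = y" using ab ab' by simp
  qed
  then show ?thesis using sub img by (simp add: is_spec_def)
qed

lemma specCp:
  assumes spec: "is_spec (words1 SM) (words2 C D) S\<phi> \<phi>"
    and specN: "is_spec (words1 SN) (words2 D C) S\<psi> \<psi>"
  shows "is_spec (words2 SM (prod_encode ` (D \<times> C))) (words2 (prod_encode ` (D \<times> C)) SN)
     (SCp C D S\<phi> \<phi> S\<psi> \<psi>) (phiCp \<phi> S\<psi> \<psi>)"
proof -
  have inj: "inj_on \<phi> S\<phi>" using spec by (simp add: is_spec_def)
  have injN: "inj_on \<psi> S\<psi>" using specN by (simp add: is_spec_def)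
  have sub: "SCp C D S\<phi> \<phi> S\<psi> \<psi> \<subseteq> words2 SM (prod_encode ` (D \<times> C))"
    using spec unfolding SCp_def is_spec_def words1_def words2_def by auto
  have img: "phiCp \<phi> S\<psi> \<psi> ` SCp C D S\<phi> \<phi> S\<psi> \<psi> \<subseteq> words2 (prod_encode ` (D \<times> C)) SN"
  proof
    fix y assume "y \<in> phiCp \<phi> S\<psi> \<psi> ` SCp C D S\<phi> \<phi> S\<psi> \<psi>"
    then obtain b x p2 where ab: "[b] \<in> S\<phi>" "x \<in> D" "p2 \<in> C" "[\<phi> [b] ! 1, p2] \<in> \<psi> ` S\<psi>"
      "y = phiCp \<phi> S\<psi> \<psi> [b, prod_encode (x,p2)]" unfolding SCp_def by auto
    obtain b1 b2 where B: "\<phi> [b] = [b1,b2]" "b1 \<in> C" "b2 \<in> D" using spec_elem[OF spec ab(1)] by blast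
    have "inv_into S\<psi> \<psi> [b2, p2] \<in> S\<psi>" using ab(4) B by (simp add: inv_into_into)
    then obtain n0 where "inv_into S\<psi> \<psi> [b2, p2] = [n0]" "n0 \<in> SN"
      using specN unfolding is_spec_def words1_def by auto
    then show "y \<in> words2 (prod_encode ` (D \<times> C)) SN"
      using ab B by (auto simp: phiCp_def words2_def)
  qed
  have "inj_on (phiCp \<phi> S\<psi> \<psi>) (SCp C D S\<phi> \<phi> S\<psi> \<psi>)"
  proof (rule inj_onI)
    fix w w' assume x: "w \<in> SCp C D S\<phi> \<phi> S\<psi> \<psi>" and y: "w' \<in> SCp C D S\<phi> \<phi> S\<psi> \<psi>"
      and e: "phiCp \<phi> S\<psi> \<psi> w = phiCp \<phi> S\<psi> \<psi> w'"
    obtain b x p2 where ab: "[b] \<in> S\<phi>" "[\<phi> [b] ! 1, p2] \<in> \<psi> ` S\<psi>" "w = [b, prod_encode (x,p2)]"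
      using x unfolding SCp_def by auto
    obtain b' x' p2' where ab': "[b'] \<in> S\<phi>" "[\<phi> [b'] ! 1, p2'] \<in> \<psi> ` S\<psi>" "w' = [b', prod_encode (x',p2')]"
      using y unfolding SCp_def by auto
    obtain b1 b2 where B: "\<phi> [b] = [b1,b2]" using spec_elem[OF spec ab(1)] by blast
    obtain b1' b2' where B': "\<phi> [b'] = [b1',b2']" using spec_elem[OF spec ab'(1)] by blast
    have e1: "x = x'" "b1 = b1'" and e2: "inv_into S\<psi> \<psi> [b2, p2] = inv_into S\<psi> \<psi> [b2', p2']"
      using e ab ab' B B' by (simp_all add: phiCp_def prod_encode_eq)
    have "[b2, p2] = [b2', p2']"
      using e2 ab(2) ab'(2) B B' by (metis f_inv_into_f nth_Cons_0 nth_Cons_Suc One_nat_def)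
    then have "\<phi> [b] = \<phi> [b']" "p2 = p2'" using B B' e1 by auto
    then show "w = w'" using inj ab ab' e1 by (auto dest: inj_onD)
  qed
  then show ?thesis using sub img by (simp add: is_spec_def)
qed

lemma specCm:
  assumes spec: "is_spec (words1 SM) (words2 C D) S\<phi> \<phi>"
    and specN: "is_spec (words1 SN) (words2 D C) S\<psi> \<psi>"
  shows "is_spec (words2 SM (prod_encode ` (D \<times> C))) (words2 (prod_encode ` (D \<times> C)) SN)
     (SCm C D S\<phi> \<phi> S\<psi> \<psi>) (phiCm \<phi> S\<psi> \<psi>)"
proof -
  have inj: "inj_on \<phi> S\<phi>" using spec by (simp add: is_spec_def)
  have sub: "SCm C D S\<phi> \<phi> S\<psi> \<psi> \<subseteq> words2 SM (prod_encode ` (D \<times> C))"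
    using spec unfolding SCm_def is_spec_def words1_def words2_def by auto
  have img: "phiCm \<phi> S\<psi> \<psi> ` SCm C D S\<phi> \<phi> S\<psi> \<psi> \<subseteq> words2 (prod_encode ` (D \<times> C)) SN"
  proof
    fix y assume "y \<in> phiCm \<phi> S\<psi> \<psi> ` SCm C D S\<phi> \<phi> S\<psi> \<psi>"
    then obtain a x p where ab: "[a] \<in> S\<phi>" "x \<in> D" "p \<in> C" "[\<phi> [a] ! 0, x] \<in> (kappa \<circ> \<psi>) ` S\<psi>"
      "y = phiCm \<phi> S\<psi> \<psi> [a, prod_encode (x,p)]" unfolding SCm_def by auto
    obtain a1 a2 where A: "\<phi> [a] = [a1,a2]" "a1 \<in> C" "a2 \<in> D" using spec_elem[OF spec ab(1)] by blast
    have "inv_into S\<psi> (kappa \<circ> \<psi>) [a1, x] \<in> S\<psi>" using ab(4) A by (simp add: inv_into_into)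
    then obtain n0 where "inv_into S\<psi> (kappa \<circ> \<psi>) [a1, x] = [n0]" "n0 \<in> SN"
      using specN unfolding is_spec_def words1_def by auto
    then show "y \<in> words2 (prod_encode ` (D \<times> C)) SN"
      using ab A by (auto simp: phiCm_def words2_def)
  qed
  have "inj_on (phiCm \<phi> S\<psi> \<psi>) (SCm C D S\<phi> \<phi> S\<psi> \<psi>)"
  proof (rule inj_onI)
    fix w w' assume x: "w \<in> SCm C D S\<phi> \<phi> S\<psi> \<psi>" and y: "w' \<in> SCm C D S\<phi> \<phi> S\<psi> \<psi>"
      and e: "phiCm \<phi> S\<psi> \<psi> w = phiCm \<phi> S\<psi> \<psi> w'"
    obtain a x p where ab: "[a] \<in> S\<phi>" "[\<phi> [a] ! 0, x] \<in> (kappa \<circ> \<psi>) ` S\<psi>" "w = [a, prod_encode (x,p)]"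
      using x unfolding SCm_def by auto
    obtain a' x' p' where ab': "[a'] \<in> S\<phi>" "[\<phi> [a'] ! 0, x'] \<in> (kappa \<circ> \<psi>) ` S\<psi>" "w' = [a', prod_encode (x',p')]"
      using y unfolding SCm_def by auto
    obtain a1 a2 where A: "\<phi> [a] = [a1,a2]" using spec_elem[OF spec ab(1)] by blast
    obtain a1' a2' where A': "\<phi> [a'] = [a1',a2']" using spec_elem[OF spec ab'(1)] by blast
    have e1: "a2 = a2'" "p = p'" and e2: "inv_into S\<psi> (kappa \<circ> \<psi>) [a1, x] = inv_into S\<psi> (kappa \<circ> \<psi>) [a1', x']"
      using e ab ab' A A' by (simp_all add: phiCm_def prod_encode_eq)
    have "[a1, x] = [a1', x']"
      using e2 ab(2) ab'(2) A A' by (metis f_inv_into_f nth_Cons_0)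
    then have "\<phi> [a] = \<phi> [a']" "x = x'" using A A' e1 by auto
    then show "w = w'" using inj ab ab' e1 by (auto dest: inj_onD)
  qed
  then show ?thesis using sub img by (simp add: is_spec_def)
qed



theorem proposition6p18:
  fixes SMm SMp SNm SNp :: "nat set"
    and m n :: "nat \<Rightarrow> nat"
    and Mm Mp Nm Np :: "nat \<Rightarrow> smat"
  assumes "bisystem SMm SMp m Mm Mp" and "FPCC SMm SMp m Mm Mp"
    and "bisystem SNm SNp n Nm Np" and "FPCC SNm SNp n Nm Np"
    and "psse1 SMp m Mm Mp SNp n Nm Np"
  shows "sse1 SMm SMp m Mm Mp SNm SNp n Nm Np"
proof -
  have eM: "SMm = SMp" using assms(2) by (simp add: FPCC_def)
  have eN: "SNm = SNp" using assms(4) by (simp add: FPCC_def)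
  obtain C D c d S\<phi> \<phi> S\<psi> \<psi> P Q X Y where
      fin: "finite C" "finite D"
    and spec: "is_spec (words1 SMp) (words2 C D) S\<phi> \<phi>" and specN: "is_spec (words1 SNp) (words2 D C) S\<psi> \<psi>"
    and hov: "\<forall>l. over C (c l) (d (Suc l)) (P l) \<and> over D (d l) (c (Suc l)) (Q l) \<and>
           (if odd l then over D (d l) (d (Suc l)) (X l) \<and> over C (c l) (c (Suc l)) (Y l)
            else over D (c l) (c (Suc l)) (X l) \<and> over C (d l) (d (Suc l)) (Y l))"
    and hs: "\<forall>l.
        sim S\<phi> \<phi> (m l) (m (Suc l)) (Mp l)
          (c (2*l)) (c (2*l+2)) (mprod (d (2*l+1)) (P (2*l)) (Q (2*l+1))) \<and>
        sim S\<psi> \<psi> (n l) (n (Suc l)) (Np l)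
          (d (2*l)) (d (2*l+2)) (mprod (c (2*l+1)) (Q (2*l)) (P (2*l+1))) \<and>
        sim S\<phi> (kappa \<circ> \<phi>) (m l) (m (Suc l)) (Mm l)
          (c (2*l)) (c (2*l+2)) (mprod (c (2*l+1)) (X (2*l)) (Y (2*l+1))) \<and>
        sim S\<psi> (kappa \<circ> \<psi>) (n l) (n (Suc l)) (Nm l)
          (d (2*l)) (d (2*l+2)) (mprod (d (2*l+1)) (Y (2*l)) (X (2*l+1))) \<and>
        sim (words2 C C) kappa
          (c (2*l+1)) (d (2*l+3)) (mprod (c (2*l+2)) (Y (2*l+1)) (P (2*l+2)))
          (c (2*l+1)) (d (2*l+3)) (mprod (d (2*l+2)) (P (2*l+1)) (Y (2*l+2))) \<and>
        sim (words2 D D) kappa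
          (d (2*l+1)) (c (2*l+3)) (mprod (d (2*l+2)) (X (2*l+1)) (Q (2*l+2)))
          (d (2*l+1)) (c (2*l+3)) (mprod (c (2*l+2)) (Q (2*l+1)) (X (2*l+2))) \<and>
        sim (words2 D C) kappa
          (c (2*l)) (d (2*l+2)) (mprod (c (2*l+1)) (X (2*l)) (P (2*l+1)))
          (c (2*l)) (d (2*l+2)) (mprod (d (2*l+1)) (P (2*l)) (X (2*l+1))) \<and>
        sim (words2 C D) kappa
          (d (2*l)) (c (2*l+2)) (mprod (d (2*l+1)) (Y (2*l)) (Q (2*l+1)))
          (d (2*l)) (c (2*l+2)) (mprod (c (2*l+1)) (Q (2*l)) (Y (2*l+1)))"
    using assms(5) unfolding psse1_def by blast
  have hP: "\<forall>l. over C (c l) (d (Suc l)) (P l)" using hov by blast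
  have hQ: "\<forall>l. over D (d l) (c (Suc l)) (Q l)" using hov by blast
  have hX0: "\<forall>l. over D (c (2*l)) (c (2*l+1)) (X (2*l))"
    using hov by (metis even_mult_iff even_numeral Suc_eq_plus1)
  have hY0: "\<forall>l. over C (d (2*l)) (d (2*l+1)) (Y (2*l))"
    using hov by (metis even_mult_iff even_numeral Suc_eq_plus1)
  have hX1: "\<forall>l. over D (d (2*l+1)) (d (2*l+2)) (X (2*l+1))"
  proof
    fix l show "over D (d (2*l+1)) (d (2*l+2)) (X (2*l+1))" using hov[rule_format, of "2*l+1"] by simp
  qed
  have hY1: "\<forall>l. over C (c (2*l+1)) (c (2*l+2)) (Y (2*l+1))"
  proof
    fix l show "over C (c (2*l+1)) (c (2*l+2)) (Y (2*l+1))" using hov[rule_format, of "2*l+1"] by simp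
  qed
  have ha: "\<forall>l. sim S\<phi> \<phi> (m l) (m (Suc l)) (Mp l) (c (2*l)) (c (2*l+2)) (mprod (d (2*l+1)) (P (2*l)) (Q (2*l+1)))" using hs by blast
  have hb: "\<forall>l. sim S\<psi> \<psi> (n l) (n (Suc l)) (Np l) (d (2*l)) (d (2*l+2)) (mprod (c (2*l+1)) (Q (2*l)) (P (2*l+1)))" using hs by blast
  have hc: "\<forall>l. sim S\<phi> (kappa \<circ> \<phi>) (m l) (m (Suc l)) (Mm l) (c (2*l)) (c (2*l+2)) (mprod (c (2*l+1)) (X (2*l)) (Y (2*l+1)))" using hs by blast
  have hd: "\<forall>l. sim S\<psi> (kappa \<circ> \<psi>) (n l) (n (Suc l)) (Nm l) (d (2*l)) (d (2*l+2)) (mprod (d (2*l+1)) (Y (2*l)) (X (2*l+1)))" using hs by blast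
  have he: "\<forall>l. sim (words2 C C) kappa (c (2*l+1)) (d (2*l+3)) (mprod (c (2*l+2)) (Y (2*l+1)) (P (2*l+2))) (c (2*l+1)) (d (2*l+3)) (mprod (d (2*l+2)) (P (2*l+1)) (Y (2*l+2)))" using hs by blast
  have hf: "\<forall>l. sim (words2 D D) kappa (d (2*l+1)) (c (2*l+3)) (mprod (d (2*l+2)) (X (2*l+1)) (Q (2*l+2))) (d (2*l+1)) (c (2*l+3)) (mprod (c (2*l+2)) (Q (2*l+1)) (X (2*l+2)))" using hs by blast
  have hg: "\<forall>l. sim (words2 D C) kappa (c (2*l)) (d (2*l+2)) (mprod (c (2*l+1)) (X (2*l)) (P (2*l+1))) (c (2*l)) (d (2*l+2)) (mprod (d (2*l+1)) (P (2*l)) (X (2*l+1)))" using hs by blast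
  have hh: "\<forall>l. sim (words2 C D) kappa (d (2*l)) (c (2*l+2)) (mprod (d (2*l+1)) (Y (2*l)) (Q (2*l+1))) (d (2*l)) (c (2*l+2)) (mprod (c (2*l+1)) (Q (2*l)) (Y (2*l+1)))" using hs by blast
  note H1 = half[OF spec specN hP hQ hX0 hX1 hY0 hY1 ha hb hc hd he hf hg]
  note H2 = half[OF specN spec hQ hP hY0 hY1 hX0 hX1 hb ha hd hc hf he hh]
  have "finite (prod_encode ` (D \<times> C)) \<and> finite (prod_encode ` (C \<times> D)) \<and>
      is_spec (words2 SMm SMp) (words2 (prod_encode ` (D \<times> C)) (prod_encode ` (C \<times> D))) (S1 S\<phi>) (phi1 \<phi>) \<and>
      is_spec (words2 SNm SNp) (words2 (prod_encode ` (C \<times> D)) (prod_encode ` (D \<times> C))) (S1 S\<psi>) (phi1 \<psi>) \<and>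
      is_spec (words2 SMp (prod_encode ` (D \<times> C))) (words2 (prod_encode ` (D \<times> C)) SNp) (SCp C D S\<phi> \<phi> S\<psi> \<psi>) (phiCp \<phi> S\<psi> \<psi>) \<and>
      is_spec (words2 SMm (prod_encode ` (D \<times> C))) (words2 (prod_encode ` (D \<times> C)) SNm) (SCm C D S\<phi> \<phi> S\<psi> \<psi>) (phiCm \<phi> S\<psi> \<psi>) \<and>
      is_spec (words2 SNp (prod_encode ` (C \<times> D))) (words2 (prod_encode ` (C \<times> D)) SMp) (SCp D C S\<psi> \<psi> S\<phi> \<phi>) (phiCp \<psi> S\<phi> \<phi>) \<and>
      is_spec (words2 SNm (prod_encode ` (C \<times> D))) (words2 (prod_encode ` (C \<times> D)) SMm) (SCm D C S\<psi> \<psi> S\<phi> \<phi>) (phiCm \<psi> S\<phi> \<phi>) \<and>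
      (\<forall>l. over (prod_encode ` (D \<times> C)) (m l) (n (Suc l)) (Hm c X P l) \<and> over (prod_encode ` (C \<times> D)) (n l) (m (Suc l)) (Hm d Y Q l) \<and>
        sim (S1 S\<phi>) (phi1 \<phi>) (m l) (m (l+2)) (mprod (m (Suc l)) (Mm l) (Mp (Suc l)))
                  (m l) (m (l+2)) (mprod (n (Suc l)) (Hm c X P l) (Hm d Y Q (Suc l))) \<and>
        sim (S1 S\<psi>) (phi1 \<psi>) (n l) (n (l+2)) (mprod (n (Suc l)) (Nm l) (Np (Suc l)))
                  (n l) (n (l+2)) (mprod (m (Suc l)) (Hm d Y Q l) (Hm c X P (Suc l))) \<and>
        sim (SCp C D S\<phi> \<phi> S\<psi> \<psi>) (phiCp \<phi> S\<psi> \<psi>) (m l) (n (l+2)) (mprod (m (Suc l)) (Mp l) (Hm c X P (Suc l)))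
                    (m l) (n (l+2)) (mprod (n (Suc l)) (Hm c X P l) (Np (Suc l))) \<and>
        sim (SCp D C S\<psi> \<psi> S\<phi> \<phi>) (phiCp \<psi> S\<phi> \<phi>) (n l) (m (l+2)) (mprod (n (Suc l)) (Np l) (Hm d Y Q (Suc l)))
                    (n l) (m (l+2)) (mprod (m (Suc l)) (Hm d Y Q l) (Mp (Suc l))) \<and>
        sim (SCm C D S\<phi> \<phi> S\<psi> \<psi>) (phiCm \<phi> S\<psi> \<psi>) (m l) (n (l+2)) (mprod (m (Suc l)) (Mm l) (Hm c X P (Suc l)))
                    (m l) (n (l+2)) (mprod (n (Suc l)) (Hm c X P l) (Nm (Suc l))) \<and>
        sim (SCm D C S\<psi> \<psi> S\<phi> \<phi>) (phiCm \<psi> S\<phi> \<phi>) (n l) (m (l+2)) (mprod (n (Suc l)) (Nm l) (Hm d Y Q (Suc l)))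
                    (n l) (m (l+2)) (mprod (m (Suc l)) (Hm d Y Q l) (Mm (Suc l))))"
    using fin spec1[OF spec] spec1[OF specN] specCp[OF spec specN] specCm[OF spec specN]
      specCp[OF specN spec] specCm[OF specN spec] H1 H2 eM eN by auto
  then show ?thesis unfolding sse1_def by blast
qed

end
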